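(* Let $k>1$ and let $\mathcal{F}_1$ be the foliation on $\mathbb{P}^2_k=\mathbb{P}(1,1,k)$ (of normal degree $2k+1$) induced by $$\delta=-k\,x_2(x_2-x_0x_1^{k-1})dx_0+k\,x_0x_2(x_1^{k-1}-x_0x_1^{k-2})dx_1+x_0(x_2-x_1^{k})dx_2.$$ Then no $\mathcal{F}_1$-invariant algebraic curve passes through the point $[1:1:1]$.
   Context: $\mathbb{P}(1,1,k)$ is the quotient of $\mathbb{C}^3\setminus\{0\}$ by $t\cdot(x_0,x_1,x_2)=(tx_0,tx_1,t^kx_2)$. An algebraic curve is the zero set of a nonconstant quasi-homogeneous polynomial $F$ (weights $1,1,k$); it is invariant by the foliation defined by $\delta$ if $\delta\wedge dF=F\Theta$ for some polynomial 2-form $\Theta$. *)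

theory Defs
  imports Complex_Main "HOL-Library.Poly_Mapping" "HOL-Library.Product_Plus"
begin

text \<open>Polynomials in C[x0,x1,x2]: finitely supported maps from exponent
  triples (i,j,l) (the monomial x0^i x1^j x2^l) to complex coefficients.\<close>

type_synonym pol3 = "(nat \<times> nat \<times> nat) \<Rightarrow>\<^sub>0 complex"

definition mon3 :: "nat \<Rightarrow> nat \<Rightarrow> nat \<Rightarrow> complex \<Rightarrow> pol3" where
  "mon3 i j l c = Poly_Mapping.single (i, j, l) c"

definition X0 :: pol3 where "X0 = mon3 1 0 0 1"
definition X1 :: pol3 where "X1 = mon3 0 1 0 1"
definition X2 :: pol3 where "X2 = mon3 0 0 1 1"

definition eval3 :: "pol3 \<Rightarrow> complex \<Rightarrow> complex \<Rightarrow> complex \<Rightarrow> complex" where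
  "eval3 p a b c = (\<Sum>m\<in>Poly_Mapping.keys p. Poly_Mapping.lookup p m * a ^ fst m * b ^ fst (snd m) * c ^ snd (snd m))"

definition pd0 :: "pol3 \<Rightarrow> pol3" where
  "pd0 p = (\<Sum>m\<in>Poly_Mapping.keys p. case m of (i, j, l) \<Rightarrow>
      mon3 (i - 1) j l (of_nat i * Poly_Mapping.lookup p m))"
definition pd1 :: "pol3 \<Rightarrow> pol3" where
  "pd1 p = (\<Sum>m\<in>Poly_Mapping.keys p. case m of (i, j, l) \<Rightarrow>
      mon3 i (j - 1) l (of_nat j * Poly_Mapping.lookup p m))"
definition pd2 :: "pol3 \<Rightarrow> pol3" where
  "pd2 p = (\<Sum>m\<in>Poly_Mapping.keys p. case m of (i, j, l) \<Rightarrow>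
      mon3 i j (l - 1) (of_nat l * Poly_Mapping.lookup p m))"

definition quasi_hom :: "nat \<Rightarrow> nat \<Rightarrow> pol3 \<Rightarrow> bool" where
  "quasi_hom k d p \<longleftrightarrow> (\<forall>m\<in>Poly_Mapping.keys p. fst m + fst (snd m) + k * snd (snd m) = d)"

definition nonconstant :: "pol3 \<Rightarrow> bool" where
  "nonconstant p \<longleftrightarrow> (\<exists>m\<in>Poly_Mapping.keys p. m \<noteq> (0, 0, 0))"

text \<open>A 1-form A0 dx0 + A1 dx1 + A2 dx2 with polynomial coefficients;
  delta \<and> dF has coefficients (A_i F_j - A_j F_i) on dx_i \<and> dx_j (i<j).
  Invariance: delta \<and> dF = F * Theta for a polynomial 2-form Theta.\<close>
definition invariant_curve :: "pol3 \<Rightarrow> pol3 \<Rightarrow> pol3 \<Rightarrow> pol3 \<Rightarrow> bool" where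
  "invariant_curve A0 A1 A2 F \<longleftrightarrow>
     (\<exists>T01 T02 T12 :: pol3.
        A0 * pd1 F - A1 * pd0 F = F * T01 \<and>
        A0 * pd2 F - A2 * pd0 F = F * T02 \<and>
        A1 * pd2 F - A2 * pd1 F = F * T12)"

definition delA0 :: "nat \<Rightarrow> pol3" where
  "delA0 k = - (of_nat k * X2 * (X2 - X0 * X1 ^ (k - 1)))"
definition delA1 :: "nat \<Rightarrow> pol3" where
  "delA1 k = of_nat k * X0 * X2 * (X1 ^ (k - 1) - X0 * X1 ^ (k - 2))"
definition delA2 :: "nat \<Rightarrow> pol3" where
  "delA2 k = X0 * (X2 - X1 ^ k)"

end

theory Submission
  imports Defs "HOL-Computational_Algebra.Polynomial"
begin

type_synonym p2 = "complex poly poly"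

definition rhot :: "pol3 \<Rightarrow> (nat\<times>nat\<times>nat) \<Rightarrow> p2" where
  "rhot p m = monom (monom (Poly_Mapping.lookup p m) (fst m)) (snd (snd m))"

definition rho :: "pol3 \<Rightarrow> p2" where
  "rho p = (\<Sum>m\<in>Poly_Mapping.keys p. rhot p m)"

lemma rho_superset: assumes "finite A" "Poly_Mapping.keys p \<subseteq> A" shows "rho p = (\<Sum>m\<in>A. rhot p m)"
  unfolding rho_def
  by (rule sum.mono_neutral_left) (use assms in \<open>auto simp: rhot_def in_keys_iff\<close>)

lemma rho_add: "rho (p + q) = rho p + rho q"
proof -
  let ?A = "Poly_Mapping.keys p \<union> Poly_Mapping.keys q"
  have "Poly_Mapping.keys (p+q) \<subseteq> ?A" by (simp add: Poly_Mapping.keys_add)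
  then have "rho (p+q) = (\<Sum>m\<in>?A. rhot (p+q) m)" by (simp add: rho_superset)
  also have "\<dots> = (\<Sum>m\<in>?A. rhot p m) + (\<Sum>m\<in>?A. rhot q m)"
    by (simp add: rhot_def Poly_Mapping.lookup_add sum.distrib flip: add_monom)
  also have "\<dots> = rho p + rho q"
    by (simp add: rho_superset[of "?A" p] rho_superset[of "?A" q])
  finally show ?thesis .
qed

lemma rho_zero[simp]: "rho 0 = 0" by (simp add: rho_def)

lemma rho_sum: "rho (sum f A) = (\<Sum>x\<in>A. rho (f x))"
  by (induction A rule: infinite_finite_induct) (auto simp: rho_add)

lemma rho_single: "rho (Poly_Mapping.single (i,j,l) c) = monom (monom c i) l"
  by (cases "c = 0") (simp_all add: rho_def rhot_def)

lemma pm_expand: "p = (\<Sum>m\<in>Poly_Mapping.keys p. Poly_Mapping.single m (Poly_Mapping.lookup p m))"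
  by (rule poly_mapping_eqI) (simp add: Poly_Mapping.lookup_sum lookup_single when_def in_keys_iff sum.delta' split: if_splits)

lemma rho_single': "rho (Poly_Mapping.single m c) = monom (monom c (fst m)) (snd (snd m))"
  by (cases m) (simp add: rho_single)

lemma rho_mult: "rho (p * q) = rho p * rho q"
proof -
  have "p * q = (\<Sum>m\<in>Poly_Mapping.keys p. Poly_Mapping.single m (Poly_Mapping.lookup p m)) * (\<Sum>m'\<in>Poly_Mapping.keys q. Poly_Mapping.single m' (Poly_Mapping.lookup q m'))"
    by (metis pm_expand)
  also have "\<dots> = (\<Sum>m\<in>Poly_Mapping.keys p. \<Sum>m'\<in>Poly_Mapping.keys q. Poly_Mapping.single (m+m') (Poly_Mapping.lookup p m * Poly_Mapping.lookup q m'))"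
    by (simp add: sum_product mult_single)
  finally have "rho (p*q) = (\<Sum>m\<in>Poly_Mapping.keys p. \<Sum>m'\<in>Poly_Mapping.keys q. rho (Poly_Mapping.single (m+m') (Poly_Mapping.lookup p m * Poly_Mapping.lookup q m')))"
    by (simp add: rho_sum)
  also have "\<dots> = (\<Sum>m\<in>Poly_Mapping.keys p. \<Sum>m'\<in>Poly_Mapping.keys q. rhot p m * rhot q m')"
    by (intro sum.cong refl) (simp add: rho_single' rhot_def mult_monom)
  also have "\<dots> = rho p * rho q" by (simp add: rho_def sum_product)
  finally show ?thesis .
qed

lemma rho_neg: "rho (- p) = - rho p"
  using rho_add[of p "-p"] by (simp add: eq_neg_iff_add_eq_0 add.commute)

lemma rho_diff: "rho (p - q) = rho p - rho q"
  using rho_add[of p "-q"] rho_neg[of q] by simp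

lemma rho_one[simp]: "rho 1 = 1"
  by (metis single_one rho_single zero_prod_def monom_eq_1 fst_conv snd_conv)

lemma rho_of_nat: "rho (of_nat n) = of_nat n"
  by (induction n) (simp_all add: rho_add)

lemma rho_power: "rho (p ^ n) = rho p ^ n"
  by (induction n) (simp_all add: rho_mult)

lemma comb:
  fixes c :: "nat \<Rightarrow> nat \<Rightarrow> complex" and k :: nat and \<alpha> \<beta> \<gamma> :: complex
  assumes kpos: "k > 0"
    and fin: "finite {(i,l). c i l \<noteq> 0}"
    and ne: "c i1 l1 \<noteq> 0"
    and eq: "\<And>i l. of_nat i * c i l + (if i>0 then of_nat k * of_nat l * c (i-1) l else 0)
          - (if l>0 then (of_nat i + of_nat k * (of_nat l - 1)) * c i (l-1) else 0)
        = \<alpha> * c i l + (if i>0 then \<beta> * c (i-1) l else 0) + (if l>0 then \<gamma> * c i (l-1) else 0)"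
  shows "\<exists>a b. \<forall>i l. c i l \<noteq> 0 \<longleftrightarrow> (i,l) = (a,b)"
proof -
  define Sp where "Sp = {(i,l). c i l \<noteq> 0}"
  have finS: "finite Sp" using fin by (simp add: Sp_def)
  have inS: "(i,l) \<in> Sp \<longleftrightarrow> c i l \<noteq> 0" for i l by (simp add: Sp_def)
  have fstS: "c i l \<noteq> 0 \<Longrightarrow> i \<in> fst ` Sp" for i l using inS[of i l] by (metis fst_conv image_eqI)
  have sndS: "c i l \<noteq> 0 \<Longrightarrow> l \<in> snd ` Sp" for i l using inS[of i l] by (metis snd_conv image_eqI)
  define b where "b = Min (snd ` Sp)"
  have b_le: "c i l \<noteq> 0 \<Longrightarrow> b \<le> l" for i l
    unfolding b_def using finS sndS by (intro Min_le) auto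
  have "b \<in> snd ` Sp" unfolding b_def using finS ne inS[of i1 l1] by (intro Min_in) auto
  then obtain i2 where i2: "c i2 b \<noteq> 0" by (auto simp: inS)
  have finrow: "finite {i. c i b \<noteq> 0}"
    by (rule finite_subset[of _ "fst ` Sp"]) (use finS fstS in auto)
  define a' where "a' = Min {i. c i b \<noteq> 0}"
  have a'in: "c a' b \<noteq> 0" unfolding a'_def using Min_in[OF finrow] i2 by auto
  have a'le: "c i b \<noteq> 0 \<Longrightarrow> a' \<le> i" for i unfolding a'_def using finrow by (intro Min_le) auto
  define e where "e = Max {i. c i b \<noteq> 0}"
  have ein: "c e b \<noteq> 0" unfolding e_def using Max_in[OF finrow] i2 by auto
  have ele: "c i b \<noteq> 0 \<Longrightarrow> i \<le> e" for i unfolding e_def using finrow by (intro Max_ge) auto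
  have rowb_below: "l > 0 \<Longrightarrow> c i (l-1) = 0" if "l = b" for i l
    using b_le[of i "l-1"] that by fastforce
  have "\<alpha> = of_nat a'"
  proof -
    have c0: "a' > 0 \<Longrightarrow> c (a'-1) b = 0" using a'le[of "a'-1"] by fastforce
    have "of_nat a' * c a' b = \<alpha> * c a' b"
      using eq[of a' b] c0 rowb_below[of b a'] by (auto split: if_splits)
    then show ?thesis using a'in by simp
  qed
  note alpha = this
  have "\<beta> = of_nat k * of_nat b"
  proof -
    have c1: "c (Suc e) b = 0" using ele[of "Suc e"] by fastforce
    have "of_nat k * of_nat b * c e b = \<beta> * c e b"
      using eq[of "Suc e" b] c1 rowb_below[of b "Suc e"] by (auto split: if_splits)
    then show ?thesis using ein by simp
  qed
  note beta = this
  have finfst: "finite (fst ` Sp)" using finS by simp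
  define a where "a = Min (fst ` Sp)"
  have a_le: "c i l \<noteq> 0 \<Longrightarrow> a \<le> i" for i l
    unfolding a_def using finS fstS by (intro Min_le) auto
  have "a \<in> fst ` Sp" unfolding a_def using finS ne inS[of i1 l1] by (intro Min_in) auto
  then obtain l3 where l3: "c a l3 \<noteq> 0" by (auto simp: inS)
  have fincol: "finite {l. c a l \<noteq> 0}"
    by (rule finite_subset[of _ "snd ` Sp"]) (use finS sndS in auto)
  define l0 where "l0 = Min {l. c a l \<noteq> 0}"
  have l0in: "c a l0 \<noteq> 0" unfolding l0_def using Min_in[OF fincol] l3 by auto
  have l0le: "c a l \<noteq> 0 \<Longrightarrow> l0 \<le> l" for l unfolding l0_def using fincol by (intro Min_le) auto
  have "a = a'"
  proof -
    have c0: "a > 0 \<Longrightarrow> c (a-1) l = 0" for l using a_le[of "a-1" l] by fastforce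
    have c1: "l0 > 0 \<Longrightarrow> c a (l0-1) = 0" using l0le[of "l0-1"] by fastforce
    have "of_nat a * c a l0 = \<alpha> * c a l0"
      using eq[of a l0] c0 c1 by (auto split: if_splits)
    then have "(of_nat a :: complex) = of_nat a'" using l0in alpha by simp
    then show ?thesis by simp
  qed
  note aa = this
  have cab: "c a b \<noteq> 0" using a'in aa by simp
  have c_below_a: "a > 0 \<Longrightarrow> c (a-1) l = 0" for l using a_le[of "a-1" l] by fastforce
  have gamma: "\<gamma> = - (of_nat a + of_nat k * of_nat b)"
  proof -
    have "- ((of_nat a + of_nat k * (of_nat (Suc b) - 1)) * c a b) = \<gamma> * c a b"
      using eq[of a "Suc b"] c_below_a alpha aa by (auto split: if_splits)
    then have "(\<gamma> + (of_nat a + of_nat k * of_nat b)) * c a b = 0" by (simp add: algebra_simps) (metis add.commute add.left_commute neg_eq_iff_add_eq_0)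
    then have "\<gamma> + (of_nat a + of_nat k * of_nat b) = 0" using cab by simp
    then show ?thesis by (metis add.commute add_eq_0_iff2 minus_unique)
  qed
  show ?thesis
  proof (rule ccontr)
    assume "\<not> ?thesis"
    then obtain i l where il: "c i l \<noteq> 0" "(i,l) \<noteq> (a,b)" using cab by blast
    define D where "D = Max ((\<lambda>p. fst p + snd p) ` Sp)"
    have Dge: "c i' l' \<noteq> 0 \<Longrightarrow> i' + l' \<le> D" for i' l'
      unfolding D_def using finS by (intro Max_ge) (auto simp: inS image_iff intro!: bexI[of _ "(i',l')"])
    have "D \<in> (\<lambda>p. fst p + snd p) ` Sp" unfolding D_def using finS ne inS[of i1 l1] by (intro Max_in) auto
    define Q where "Q = {p \<in> Sp. fst p + snd p = D}"
    have finQ: "finite Q" using finS by (simp add: Q_def)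
    have "Q \<noteq> {}" using \<open>D \<in> _\<close> unfolding Q_def by force
    define L where "L = Max (snd ` Q)"
    have "L \<in> snd ` Q" unfolding L_def using finQ \<open>Q \<noteq> {}\<close> by (intro Max_in) auto
    then obtain i0 where i0: "c i0 L \<noteq> 0" "i0 + L = D" by (auto simp: Q_def inS)
    have Lge: "c i' l' \<noteq> 0 \<Longrightarrow> i' + l' = D \<Longrightarrow> l' \<le> L" for i' l'
      unfolding L_def using finQ by (intro Max_ge) (auto simp: Q_def inS image_iff intro!: bexI[of _ "(i',l')"])
    have z1: "c i0 (Suc L) = 0" using Dge[of i0 "Suc L"] i0 by auto
    have z2: "i0 > 0 \<Longrightarrow> c (i0-1) (Suc L) = 0" using Dge[of "i0-1" "Suc L"] Lge[of "i0-1" "Suc L"] i0 by fastforce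
    have "- ((of_nat i0 + of_nat k * of_nat L) * c i0 L) = \<gamma> * c i0 L"
      using eq[of i0 "Suc L"] z1 z2 by (auto split: if_splits)
    then have "(\<gamma> + (of_nat i0 + of_nat k * of_nat L)) * c i0 L = 0" by (simp add: algebra_simps) (metis add.commute add.left_commute neg_eq_iff_add_eq_0)
    then have "\<gamma> + (of_nat i0 + of_nat k * of_nat L) = 0" using i0 by simp
    then have "(of_nat i0 + of_nat k * of_nat L :: complex) = of_nat a + of_nat k * of_nat b"
      using gamma by (simp add: algebra_simps)
    then have e1: "i0 + k * L = a + k * b" by (metis of_nat_add of_nat_mult of_nat_eq_iff)
    have "i0 \<ge> a" "L \<ge> b" using a_le b_le i0 by auto
    moreover have "i + l > a + b" using il a_le[OF il(1)] b_le[OF il(1)] by auto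
    moreover have "i + l \<le> D" using Dge il by auto
    ultimately have "i0 + L > a + b" using i0(2) by linarith
    show False
    proof (cases "L = b")
      case True
      then show False using e1 \<open>i0 + L > a + b\<close> by simp
    next
      case False
      then have "L > b" using \<open>L \<ge> b\<close> by simp
      then have "k * L > k * b" using kpos by simp
      then show False using e1 \<open>i0 \<ge> a\<close> by linarith
    qed
  qed
qed

lemma coeff_mult_01:
  fixes T q :: "'a::comm_semiring_1 poly"
  assumes "\<And>j. j \<ge> 2 \<Longrightarrow> coeff T j = 0"
  shows "coeff (T * q) l = coeff T 0 * coeff q l + (if l > 0 then coeff T 1 * coeff q (l-1) else 0)"
proof (cases l)
  case 0 then show ?thesis by (simp add: coeff_mult)
next
  case (Suc m)
  have "coeff (T * q) l = (\<Sum>j\<le>Suc m. coeff T j * coeff q (Suc m - j))" by (simp add: coeff_mult Suc)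
  also have "\<dots> = (\<Sum>j\<in>{0,1}. coeff T j * coeff q (Suc m - j))"
    by (rule sum.mono_neutral_right) (auto simp: assms)
  finally show ?thesis by (simp add: Suc)
qed

lemma coeff_mult_0:
  fixes T q :: "'a::comm_semiring_1 poly"
  assumes "\<And>j. j \<ge> 1 \<Longrightarrow> coeff T j = 0"
  shows "coeff (T * q) l = coeff T 0 * coeff q l"
proof -
  have "coeff (T * q) l = (\<Sum>j\<le>l. coeff T j * coeff q (l - j))" by (simp add: coeff_mult)
  also have "\<dots> = (\<Sum>j\<in>{0}. coeff T j * coeff q (l - j))"
    by (rule sum.mono_neutral_right) (auto simp: assms)
  finally show ?thesis by simp
qed

lemma deg_le_bound:
  fixes T q :: "'a::idom poly"
  assumes "q \<noteq> 0" "degree (T * q) \<le> degree q + m"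
  shows "\<And>j. j > m \<Longrightarrow> coeff T j = 0"
proof -
  fix j assume j: "j > m"
  show "coeff T j = 0"
  proof (cases "T = 0")
    case False
    then have "degree T \<le> m" using assms degree_mult_eq[OF False assms(1)] by simp
    then show ?thesis using j by (simp add: coeff_eq_0)
  qed simp
qed

lemma key2:
  fixes f T P :: "complex poly poly" and k :: nat
  assumes kpos: "k > 0" and fnz: "f \<noteq> 0" and PT: "P = T * f"
    and Pc: "\<And>i l. coeff (coeff P l) i = of_nat i * coeff (coeff f l) i
        + (if i>0 then of_nat k * of_nat l * coeff (coeff f l) (i-1) else 0)
        - (if l>0 then (of_nat i + of_nat k * (of_nat l - 1)) * coeff (coeff f (l-1)) i else 0)"
  shows "\<exists>a b. \<forall>i l. coeff (coeff f l) i \<noteq> 0 \<longleftrightarrow> (i,l) = (a,b)"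
proof -
  define c where "c i l = coeff (coeff f l) i" for i l
  define n where "n = degree f"
  have fn: "coeff f n \<noteq> 0" using fnz by (simp add: n_def)
  have cz: "l > n \<Longrightarrow> c i l = 0" for i l by (simp add: c_def n_def coeff_eq_0)
  have "degree P \<le> n + 1"
  proof (rule degree_le, intro allI impI)
    fix l assume l: "n + 1 < l"
    show "coeff P l = 0"
      by (rule poly_eqI) (use l in \<open>simp add: Pc[folded c_def] cz\<close>)
  qed
  then have T2: "\<And>j. j \<ge> 2 \<Longrightarrow> coeff T j = 0"
    using deg_le_bound[of f T 1] fnz PT by (simp add: n_def)
  define t0 where "t0 = coeff T 0"
  define t1 where "t1 = coeff T 1"
  have Pl: "coeff P l = t0 * coeff f l + (if l > 0 then t1 * coeff f (l-1) else 0)" for l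
    unfolding PT t0_def t1_def by (rule coeff_mult_01[OF T2])
  have "degree (coeff P (n+1)) \<le> degree (coeff f n) + 0"
  proof (rule degree_le, intro allI impI)
    fix i assume i: "degree (coeff f n) + 0 < i"
    have "coeff (coeff f n) i = 0" using i by (simp add: coeff_eq_0)
    then show "coeff (coeff P (n+1)) i = 0" by (simp add: Pc cz[unfolded c_def])
  qed
  moreover have "coeff P (n+1) = t1 * coeff f n" using Pl[of "n+1"] cz[unfolded c_def] 
    by (simp add: n_def coeff_eq_0)
  ultimately have t1z: "\<And>j. j > 0 \<Longrightarrow> coeff t1 j = 0" using deg_le_bound[of "coeff f n" t1 0] fn by simp
  define b where "b = (LEAST l. coeff f l \<noteq> 0)"
  have fb: "coeff f b \<noteq> 0" unfolding b_def by (rule LeastI[of _ n]) (rule fn)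
  have fbelow: "l < b \<Longrightarrow> coeff f l = 0" for l unfolding b_def using not_less_Least by blast
  have "degree (coeff P b) \<le> degree (coeff f b) + 1"
  proof (rule degree_le, intro allI impI)
    fix i assume i: "degree (coeff f b) + 1 < i"
    have "coeff (coeff f b) i = 0" "coeff (coeff f b) (i-1) = 0" using i by (simp_all add: coeff_eq_0)
    moreover have "b > 0 \<Longrightarrow> coeff f (b-1) = 0" using fbelow by simp
    ultimately show "coeff (coeff P b) i = 0" by (simp add: Pc)
  qed
  moreover have "coeff P b = t0 * coeff f b" using Pl[of b] fbelow[of "b-1"] by (cases "b = 0") simp_all
  ultimately have t0z: "\<And>j. j > 1 \<Longrightarrow> coeff t0 j = 0" using deg_le_bound[of "coeff f b" t0 1] fb by simp
  define \<alpha> where "\<alpha> = coeff t0 0"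
  define \<beta> where "\<beta> = coeff t0 1"
  define \<gamma> where "\<gamma> = coeff t1 0"
  have eq: "of_nat i * c i l + (if i>0 then of_nat k * of_nat l * c (i-1) l else 0)
          - (if l>0 then (of_nat i + of_nat k * (of_nat l - 1)) * c i (l-1) else 0)
        = \<alpha> * c i l + (if i>0 then \<beta> * c (i-1) l else 0) + (if l>0 then \<gamma> * c i (l-1) else 0)" for i l
  proof -
    have "coeff (coeff P l) i = coeff (t0 * coeff f l) i + (if l > 0 then coeff (t1 * coeff f (l-1)) i else 0)"
      by (simp add: Pl)
    also have "\<dots> = \<alpha> * c i l + (if i>0 then \<beta> * c (i-1) l else 0) + (if l>0 then \<gamma> * c i (l-1) else 0)"
      using coeff_mult_01[of t0 "coeff f l" i] coeff_mult_0[of t1 "coeff f (l-1)" i] t0z t1z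
      by (simp add: \<alpha>_def \<beta>_def \<gamma>_def c_def)
    finally show ?thesis by (simp only: Pc c_def)
  qed
  have fin: "finite {(i,l). c i l \<noteq> 0}"
  proof (rule finite_subset)
    show "{(i,l). c i l \<noteq> 0} \<subseteq> (\<lambda>(l,i). (i,l)) ` (SIGMA l:{..n}. {..degree (coeff f l)})"
    proof (clarify)
      fix i l assume "c i l \<noteq> 0"
      then have "l \<le> n" "i \<le> degree (coeff f l)" using cz by (auto simp: c_def le_degree le_degree[of "coeff f l"] intro: ccontr)
      then show "(i, l) \<in> (\<lambda>(l,i). (i,l)) ` (SIGMA l:{..n}. {..degree (coeff f l)})" by force
    qed
  qed simp
  have ne: "c (degree (coeff f n)) n \<noteq> 0" using fn by (simp add: c_def)
  from comb[OF kpos fin ne eq] show ?thesis by (simp add: c_def)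
qed

abbreviation cc :: "p2 \<Rightarrow> nat \<Rightarrow> nat \<Rightarrow> complex" where "cc f i l \<equiv> coeff (coeff f l) i"

lemma cc_monom: "cc (monom (monom c a) b) i l = (if a = i \<and> b = l then c else 0)"
  by simp

lemma cc_rho: "cc (rho p) i l = (\<Sum>m\<in>Poly_Mapping.keys p. if fst m = i \<and> snd (snd m) = l then Poly_Mapping.lookup p m else 0)"
  unfolding rho_def rhot_def coeff_sum by (intro sum.cong refl) simp

lemma rho_mon3: "rho (mon3 i j l c) = monom (monom c i) l"
  by (simp add: mon3_def rho_single)

lemma cc_pd0: "cc (rho (pd0 p)) i l = of_nat (Suc i) * cc (rho p) (Suc i) l"
proof -
  have "rho (pd0 p) = (\<Sum>m\<in>Poly_Mapping.keys p. monom (monom (of_nat (fst m) * Poly_Mapping.lookup p m) (fst m - 1)) (snd (snd m)))"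
    unfolding pd0_def rho_sum by (intro sum.cong refl) (auto simp: rho_mon3 split: prod.splits)
  then have "cc (rho (pd0 p)) i l = (\<Sum>m\<in>Poly_Mapping.keys p. if fst m - 1 = i \<and> snd (snd m) = l then of_nat (fst m) * Poly_Mapping.lookup p m else 0)"
    by (simp only: coeff_sum) (intro sum.cong refl, simp)
  also have "\<dots> = (\<Sum>m\<in>Poly_Mapping.keys p. of_nat (Suc i) * (if fst m = Suc i \<and> snd (snd m) = l then Poly_Mapping.lookup p m else 0))"
    by (intro sum.cong refl) auto
  finally show ?thesis by (simp add: cc_rho sum_distrib_left)
qed

lemma cc_pd2: "cc (rho (pd2 p)) i l = of_nat (Suc l) * cc (rho p) i (Suc l)"
proof -
  have "rho (pd2 p) = (\<Sum>m\<in>Poly_Mapping.keys p. monom (monom (of_nat (snd (snd m)) * Poly_Mapping.lookup p m) (fst m)) (snd (snd m) - 1))"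
    unfolding pd2_def rho_sum by (intro sum.cong refl) (auto simp: rho_mon3 split: prod.splits)
  then have "cc (rho (pd2 p)) i l = (\<Sum>m\<in>Poly_Mapping.keys p. if fst m = i \<and> snd (snd m) - 1 = l then of_nat (snd (snd m)) * Poly_Mapping.lookup p m else 0)"
    by (simp only: coeff_sum) (intro sum.cong refl, simp)
  also have "\<dots> = (\<Sum>m\<in>Poly_Mapping.keys p. of_nat (Suc l) * (if fst m = i \<and> snd (snd m) = Suc l then Poly_Mapping.lookup p m else 0))"
    by (intro sum.cong refl) auto
  finally show ?thesis by (simp add: cc_rho sum_distrib_left)
qed

abbreviation SS :: p2 where "SS \<equiv> monom (monom 1 1) 0"
abbreviation ZZ :: p2 where "ZZ \<equiv> monom 1 1"

lemma rho_X0: "rho X0 = SS" by (simp add: X0_def rho_mon3)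
lemma rho_X1: "rho X1 = 1" by (simp add: X1_def rho_mon3 monom_eq_1)
lemma rho_X2: "rho X2 = ZZ" by (simp add: X2_def rho_mon3 monom_eq_1)

lemma cc_S: "cc (SS * X) i l = (if i = 0 then 0 else cc X (i-1) l)"
  by (simp add: coeff_monom_mult)
lemma cc_Z: "cc (ZZ * X) i l = (if l = 0 then 0 else cc X i (l-1))"
  by (simp add: coeff_monom_mult)
lemma cc_k: "cc (of_nat k * X) i l = of_nat k * cc X i l"
  by (simp add: of_nat_poly)

lemma rho_A0: "rho (delA0 k) = - (of_nat k * ZZ * (ZZ - SS))"
  by (simp add: delA0_def rho_neg rho_mult rho_diff rho_power rho_of_nat rho_X0 rho_X1 rho_X2)
lemma rho_A2: "rho (delA2 k) = SS * (ZZ - 1)"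
  by (simp add: delA2_def rho_mult rho_diff rho_power rho_X0 rho_X1 rho_X2)

lemma Pexp: "- (of_nat k * ZZ * (ZZ - SS)) * G2 - SS * (ZZ - 1) * G0
   = SS * G0 - SS * (ZZ * G0) + of_nat k * (ZZ * (SS * G2)) - of_nat k * (ZZ * (ZZ * G2))"
  by (simp add: algebra_simps)

lemma Pc_formula:
  assumes "P = SS * G0 - SS * (ZZ * G0) + of_nat k * (ZZ * (SS * G2)) - of_nat k * (ZZ * (ZZ * G2))"
    and "\<And>i l. cc G0 i l = of_nat (Suc i) * cc f (Suc i) l"
    and "\<And>i l. cc G2 i l = of_nat (Suc l) * cc f i (Suc l)"
  shows "cc P i l = of_nat i * cc f i l
        + (if i>0 then of_nat k * of_nat l * cc f (i-1) l else 0)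
        - (if l>0 then (of_nat i + of_nat k * (of_nat l - 1)) * cc f i (l-1) else 0)"
proof -
  have gen: "cc P i l = (if i = 0 then 0 else cc G0 (i-1) l)
     - (if i = 0 then 0 else if l = 0 then 0 else cc G0 (i-1) (l-1))
     + of_nat k * (if l = 0 then 0 else if i = 0 then 0 else cc G2 (i-1) (l-1))
     - of_nat k * (if l = 0 then 0 else if l - 1 = 0 then 0 else cc G2 i (l-1-1))" for i l
    unfolding assms(1) by (simp only: coeff_add coeff_diff cc_k cc_S cc_Z)
  show ?thesis
    by (cases i; cases l) (simp_all add: gen assms(2,3) algebra_simps)
qed

theorem lemma4p10:
  fixes k d :: nat and F :: pol3
  assumes "k > 1"
    and "quasi_hom k d F"
    and "nonconstant F"
    and "invariant_curve (delA0 k) (delA1 k) (delA2 k) F"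
  shows "eval3 F 1 1 1 \<noteq> 0"
proof -
  obtain T02 where e: "delA0 k * pd2 F - delA2 k * pd0 F = F * T02"
    using assms(4) unfolding invariant_curve_def by blast
  define f where "f = rho F"
  define P where "P = rho (delA0 k * pd2 F - delA2 k * pd0 F)"
  have PT: "P = rho T02 * f" unfolding P_def f_def e by (simp add: rho_mult mult.commute)
  have "P = SS * rho (pd0 F) - SS * (ZZ * rho (pd0 F)) + of_nat k * (ZZ * (SS * rho (pd2 F))) - of_nat k * (ZZ * (ZZ * rho (pd2 F)))"
    unfolding P_def rho_diff rho_mult rho_A0 rho_A2 by (rule Pexp)
  from Pc_formula[OF this cc_pd0 cc_pd2, folded f_def]
  have Pc: "\<And>i l. cc P i l = of_nat i * cc f i l
        + (if i>0 then of_nat k * of_nat l * cc f (i-1) l else 0)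
        - (if l>0 then (of_nat i + of_nat k * (of_nat l - 1)) * cc f i (l-1) else 0)" .
  have inj: "m = m'" if "m \<in> Poly_Mapping.keys F" "m' \<in> Poly_Mapping.keys F"
      "fst m = fst m'" "snd (snd m) = snd (snd m')" for m m'
  proof -
    have "fst m + fst (snd m) + k * snd (snd m) = d" "fst m' + fst (snd m') + k * snd (snd m') = d"
      using assms(2) that(1,2) unfolding quasi_hom_def by auto
    then have "fst (snd m) = fst (snd m')" using that(3,4) by simp
    then show ?thesis using that(3,4) by (simp add: prod_eq_iff)
  qed
  have ccl: "cc f (fst m) (snd (snd m)) = Poly_Mapping.lookup F m" if "m \<in> Poly_Mapping.keys F" for m
  proof -
    have "cc f (fst m) (snd (snd m)) = (\<Sum>m'\<in>Poly_Mapping.keys F. if m' = m then Poly_Mapping.lookup F m' else 0)"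
      unfolding f_def cc_rho by (intro sum.cong refl) (use inj that in auto)
    also have "\<dots> = Poly_Mapping.lookup F m" using that by (simp add: sum.delta')
    finally show ?thesis .
  qed
  obtain m0 where m0: "m0 \<in> Poly_Mapping.keys F" using assms(3) unfolding nonconstant_def by blast
  have "f \<noteq> 0"
  proof
    assume "f = 0"
    then have "cc f (fst m0) (snd (snd m0)) = 0" by simp
    then show False using ccl[OF m0] m0 by (simp add: in_keys_iff)
  qed
  from key2[of k f P "rho T02"] this PT Pc assms(1)
  obtain a b where ab: "\<And>i l. cc f i l \<noteq> 0 \<longleftrightarrow> (i,l) = (a,b)" by auto
  have proj: "(fst m, snd (snd m)) = (a,b)" if "m \<in> Poly_Mapping.keys F" for m
    using ab[of "fst m" "snd (snd m)"] ab[of "snd (snd m)" "fst m"] ccl[OF that] that by (auto simp: in_keys_iff)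
  have "Poly_Mapping.keys F = {m0}"
  proof
    show "Poly_Mapping.keys F \<subseteq> {m0}"
    proof
      fix m assume m: "m \<in> Poly_Mapping.keys F"
      show "m \<in> {m0}" using inj[OF m m0] proj[OF m] proj[OF m0] by simp
    qed
  qed (use m0 in simp)
  moreover have "Poly_Mapping.lookup F m0 \<noteq> 0" using m0 by (simp add: in_keys_iff)
  ultimately show ?thesis by (simp add: eval3_def)
qed

end
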